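(* Suppose each net demand function $D_i$ ($i=1,\dots,N$) satisfies the Net Demand Assumption. Let $\mathcal L$ be the Lagrangian defined below. Then a vector $(\mathbf P^*,\mathcal Q^*,\mathbf E^*,\mathbf L^* )\in\mathbb R^N_{>0}\times\mathbb R^{N(N+2)}_{\ge0}$ is a saddle point of $\mathcal L$ on $\mathbb R^N_{\ge0}\times\mathbb R^{N(N+2)}_{\ge0}$ if and only if it is a competitive equilibrium.
   Context: Economy with $N$ sectors; sector $i$ has production function $F_i:\mathbb R^{N+2}_{\ge0}\to\mathbb R_{\ge0}$, labor cost $W_i:\mathbb R_{\ge0}\to\mathbb R_{>0}$; carbon price $P_E>0$ is fixed. An allocation is $(\mathcal Q,\mathbf E,\mathbf L)$ with $\mathcal Q=(q_{ij})_{i,j=1}^N$, $\mathbf q_i=(q_{ij})_j$, $\mathbf E=(E_i)$, $\mathbf L=(L_i)$, all nonnegative. Profit $\Pi_i(\mathbf P,P_E,\mathbf q_i,E_i,L_i)=P_iF_i(\mathbf q_i,E_i,L_i)-\sum_jP_jq_{ij}-P_EE_i-W_i(L_i)$. Net Demand Assumption: $D_i:\mathbb R_{\ge0}\to\mathbb R$ is strictly decreasing and continuous on $\mathbb R_{>0}$, with $\lim_{P\to0}D_i(P)=\infty$ and $\lim_{P\to\infty}D_i(P)\le0$. Consumer surplus $\Delta_i(P)=\int_1^PD_i(z)\,dz$ (i.e. $-\int_P^1D_i$ for $P\le1$, possibly $-\infty$ at $P=0$). Lagrangian: $\mathcal L(\mathbf P,\mathcal Q,\mathbf E,\mathbf L)=\sum_{i=1}^N\{P_iF_i(\mathbf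 q_i,E_i,L_i)-\sum_jP_jq_{ij}-P_EE_i-W_i(L_i)-\Delta_i(P_i)\}$. Saddle point: $(\mathbf P^*,\mathcal Q^*,\mathbf E^*,\mathbf L^* )$ with $\mathcal L(\mathbf P^*,\mathcal Q,\mathbf E,\mathbf L)\le\mathcal L(\mathbf P^*,\mathcal Q^*,\mathbf E^*,\mathbf L^* )\le\mathcal L(\mathbf P,\mathcal Q^*,\mathbf E^*,\mathbf L^* )$ for all $\mathbf P\in\mathbb R^N_{\ge0}$, $(\mathcal Q,\mathbf E,\mathbf L)\in\mathbb R^{N(N+2)}_{\ge0}$. Competitive equilibrium: $(\mathbf P^*,\mathcal Q^*,\mathbf E^*,\mathbf L^* )\in\mathbb R^N_{\ge0}\times\mathbb R^{N(N+2)}_{\ge0}$ such that for each $i$: (i) market clearing $F_i(\mathbf q_i^*,E_i^*,L_i^* )=D_i(P_i^* )+\sum_{j=1}^Nq^*_{ji}$; (ii) $(\mathbf q_i^*,E_i^*,L_i^* )$ maximizes $\Pi_i(\mathbf P^*,P_E,\cdot)$ over $\mathbb R^{N+2}_{\ge0}$. *)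

theory Defs
  imports "HOL-Analysis.Analysis"
begin

text \<open>Sectors are indexed by a finite type 'n (N = CARD('n)).
  Production functions: F i q E L with q :: 'n => real the vector of intermediate inputs.\<close>

definition net_demand_assumption :: "(real \<Rightarrow> real) \<Rightarrow> bool" where
  "net_demand_assumption D \<longleftrightarrow>
     strict_antimono_on {0<..} D \<and>
     continuous_on {0<..} D \<and>
     filterlim D at_top (at_right 0) \<and>
     (\<exists>l::ereal. ((\<lambda>P. ereal (D P)) \<longlongrightarrow> l) at_top \<and> l \<le> 0)"

text \<open>Consumer surplus Delta(P) = integral from 1 to P of D; at P = 0 it is the
  (extended real) limit from the right, i.e. minus the improper integral over (0,1],
  possibly -infinity.\<close>

definition surplus_pos :: "(real \<Rightarrow> real) \<Rightarrow> real \<Rightarrow> real" where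
  "surplus_pos D P = (if 1 \<le> P then integral {1..P} D else - integral {P..1} D)"

definition surplus :: "(real \<Rightarrow> real) \<Rightarrow> real \<Rightarrow> ereal" where
  "surplus D P = (if 0 < P then ereal (surplus_pos D P)
                  else Lim (at_right 0) (\<lambda>x. ereal (surplus_pos D x)))"

definition profit ::
  "('n \<Rightarrow> ('n \<Rightarrow> real) \<Rightarrow> real \<Rightarrow> real \<Rightarrow> real) \<Rightarrow> ('n \<Rightarrow> real \<Rightarrow> real) \<Rightarrow>
   ('n \<Rightarrow> real) \<Rightarrow> real \<Rightarrow> 'n \<Rightarrow> ('n \<Rightarrow> real) \<Rightarrow> real \<Rightarrow> real \<Rightarrow> real" where
  "profit F W P PE i qi Ei Li =
     P i * F i qi Ei Li - (\<Sum>j\<in>UNIV. P j * qi j) - PE * Ei - W i Li"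

definition lagrangian ::
  "('n::finite \<Rightarrow> ('n \<Rightarrow> real) \<Rightarrow> real \<Rightarrow> real \<Rightarrow> real) \<Rightarrow> ('n \<Rightarrow> real \<Rightarrow> real) \<Rightarrow>
   ('n \<Rightarrow> real \<Rightarrow> real) \<Rightarrow> real \<Rightarrow>
   ('n \<Rightarrow> real) \<Rightarrow> ('n \<Rightarrow> 'n \<Rightarrow> real) \<Rightarrow> ('n \<Rightarrow> real) \<Rightarrow> ('n \<Rightarrow> real) \<Rightarrow> ereal" where
  "lagrangian F W D PE P Q E L =
     (\<Sum>i\<in>UNIV. ereal (profit F W P PE i (Q i) (E i) (L i)) - surplus (D i) (P i))"

definition nonneg_alloc :: "('n \<Rightarrow> 'n \<Rightarrow> real) \<Rightarrow> ('n \<Rightarrow> real) \<Rightarrow> ('n \<Rightarrow> real) \<Rightarrow> bool" where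
  "nonneg_alloc Q E L \<longleftrightarrow> (\<forall>i j. 0 \<le> Q i j) \<and> (\<forall>i. 0 \<le> E i) \<and> (\<forall>i. 0 \<le> L i)"

definition saddle_point where
  "saddle_point F W D PE Ps Qs Es Ls \<longleftrightarrow>
     (\<forall>Q E L. nonneg_alloc Q E L \<longrightarrow>
        lagrangian F W D PE Ps Q E L \<le> lagrangian F W D PE Ps Qs Es Ls) \<and>
     (\<forall>P. (\<forall>i. 0 \<le> P i) \<longrightarrow>
        lagrangian F W D PE Ps Qs Es Ls \<le> lagrangian F W D PE P Qs Es Ls)"

definition competitive_equilibrium where
  "competitive_equilibrium F W D PE Ps Qs Es Ls \<longleftrightarrow>
     (\<forall>i. 0 \<le> Ps i) \<and> nonneg_alloc Qs Es Ls \<and>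
     (\<forall>i. F i (Qs i) (Es i) (Ls i) = D i (Ps i) + (\<Sum>j\<in>UNIV. Qs j i)) \<and>
     (\<forall>i. \<forall>q e l. (\<forall>j. 0 \<le> q j) \<and> 0 \<le> e \<and> 0 \<le> l \<longrightarrow>
        profit F W Ps PE i q e l \<le> profit F W Ps PE i (Qs i) (Es i) (Ls i))"

end

theory Submission
  imports Defs
begin

lemma cont_sub: "continuous_on {0<..} D \<Longrightarrow> 0 < x \<Longrightarrow> continuous_on {x..y} (D::real\<Rightarrow>real)"
  by (rule continuous_on_subset) auto

lemma sp_diff:
  assumes c: "continuous_on {0<..} D" and x: "0 < x" "x \<le> y"
  shows "surplus_pos D y - surplus_pos D x = integral {x..y} D"
proof -
  have I: "\<And>a b. 0 < a \<Longrightarrow> D integrable_on {a..b}"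
    using c by (intro integrable_continuous_real cont_sub) auto
  consider "1 \<le> x" | "x < 1" "1 \<le> y" | "y < 1" using x by linarith
  then show ?thesis
  proof cases
    case 1
    have "integral {1..x} D + integral {x..y} D = integral {1..y} D"
      using Henstock_Kurzweil_Integration.integral_combine[where a=1 and c=x and b=y and f=D] 1 x I by auto
    then show ?thesis using 1 x by (simp add: surplus_pos_def)
  next
    case 2
    have "integral {x..1} D + integral {1..y} D = integral {x..y} D"
      using Henstock_Kurzweil_Integration.integral_combine[where a=x and c=1 and b=y and f=D] 2 x I by auto
    then show ?thesis using 2 x by (simp add: surplus_pos_def)
  next
    case 3
    have "integral {x..y} D + integral {y..1} D = integral {x..1} D"
      using Henstock_Kurzweil_Integration.integral_combine[where a=x and c=y and b=1 and f=D] 3 x I by auto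
    then show ?thesis using 3 x by (simp add: surplus_pos_def)
  qed
qed

lemma nd_anti: "net_demand_assumption D \<Longrightarrow> 0 < x \<Longrightarrow> x < y \<Longrightarrow> D y < D x"
  unfolding net_demand_assumption_def monotone_on_def by auto

lemma nd_cont: "net_demand_assumption D \<Longrightarrow> continuous_on {0<..} D"
  unfolding net_demand_assumption_def by auto

lemma real_ineq:
  assumes nd: "net_demand_assumption D" and ps: "0 < ps" and p: "0 < p"
  shows "ps * D ps - surplus_pos D ps \<le> p * D ps - surplus_pos D p"
proof (cases "ps \<le> p")
  case True
  have pw: "\<And>z. z \<in> {ps..p} \<Longrightarrow> D z \<le> D ps"
    using nd_anti[OF nd] ps by (metis atLeastAtMost_iff le_less)
  have "integral {ps..p} D \<le> integral {ps..p} (\<lambda>_. D ps)"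
    using nd_cont[OF nd] ps True
    by (intro integral_le integrable_continuous_real cont_sub)
       (use pw in auto)
  then have "surplus_pos D p - surplus_pos D ps \<le> (p - ps) * D ps"
    using sp_diff[OF nd_cont[OF nd] ps True] True by simp
  then show ?thesis by (simp add: algebra_simps)
next
  case False
  have pw: "\<And>z. z \<in> {p..ps} \<Longrightarrow> D ps \<le> D z"
    using nd_anti[OF nd] p by (metis atLeastAtMost_iff le_less less_le_trans)
  have "integral {p..ps} (\<lambda>_. D ps) \<le> integral {p..ps} D"
    using nd_cont[OF nd] p False
    by (intro integral_le integrable_continuous_real cont_sub)
       (use pw in auto)
  then have "(ps - p) * D ps \<le> surplus_pos D ps - surplus_pos D p"
    using sp_diff[OF nd_cont[OF nd] p] False by simp
  then show ?thesis by (simp add: algebra_simps)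
qed

lemma sp_tendsto:
  assumes nd: "net_demand_assumption D"
  shows "((\<lambda>x. ereal (surplus_pos D x)) \<longlongrightarrow> surplus D 0) (at_right 0)"
proof -
  have "filterlim D at_top (at_right 0)" using nd unfolding net_demand_assumption_def by auto
  then have "eventually (\<lambda>x. 0 < D x) (at_right (0::real))"
    unfolding filterlim_at_top_dense by auto
  then obtain b where b: "b > 0" "\<And>y. 0 < y \<Longrightarrow> y < b \<Longrightarrow> 0 < D y"
    using eventually_at_right[of 0 "1::real"] by auto
  define I where "I = {0<..<b::real}"
  have mono: "ereal (surplus_pos D a) \<le> ereal (surplus_pos D c)"
    if "a \<in> I" "c \<in> I" "0 < a" "a \<le> c" for a c
  proof -
    have "0 \<le> integral {a..c} D"
      using that b nd_cont[OF nd]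
      by (intro integral_nonneg integrable_continuous_real cont_sub) (auto simp: I_def intro: less_imp_le)
    then show ?thesis using sp_diff[OF nd_cont[OF nd] \<open>0 < a\<close> \<open>a \<le> c\<close>] by simp
  qed
  have lim: "((\<lambda>x. ereal (surplus_pos D x)) \<longlongrightarrow>
        Inf ((\<lambda>x. ereal (surplus_pos D x)) ` ({0<..} \<inter> I))) (at 0 within ({0<..} \<inter> I))"
    by (rule Lim_right_bound[where K="-\<infinity>"]) (use mono in auto)
  have eq: "at (0::real) within ({0<..} \<inter> I) = at_right 0"
    by (rule at_within_nhd[where S="{..<b}"]) (auto simp: I_def b)
  have lim2: "((\<lambda>x. ereal (surplus_pos D x)) \<longlongrightarrow>
        Inf ((\<lambda>x. ereal (surplus_pos D x)) ` ({0<..} \<inter> I))) (at_right 0)"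
    using lim eq by simp
  have "surplus D 0 = Inf ((\<lambda>x. ereal (surplus_pos D x)) ` ({0<..} \<inter> I))"
    unfolding surplus_def using tendsto_Lim[OF _ lim2] by simp
  then show ?thesis using lim2 by simp
qed

lemma sp_deriv:
  assumes nd: "net_demand_assumption D" and ps: "0 < ps"
  shows "(surplus_pos D has_real_derivative D ps) (at ps)"
proof -
  let ?a = "ps / 2" and ?b = "2 * ps"
  have c: "continuous_on {?a..?b} D" using nd_cont[OF nd] ps by (intro cont_sub) auto
  have "((\<lambda>x. integral {?a..x} D) has_real_derivative D ps) (at ps within {?a..?b})"
    by (rule integral_has_real_derivative[OF c]) (use ps in auto)
  then have "((\<lambda>x. integral {?a..x} D) has_real_derivative D ps) (at ps)"
    using at_within_interior[of ps "{?a..?b}"] ps by simp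
  then have d: "((\<lambda>x. surplus_pos D ?a + integral {?a..x} D) has_real_derivative D ps) (at ps)"
    by (auto intro!: derivative_eq_intros)
  show ?thesis
  proof (rule has_field_derivative_transform_within_open[OF d, of "{?a<..}"])
    fix x assume "x \<in> {?a<..}"
    then show "surplus_pos D ?a + integral {?a..x} D = surplus_pos D x"
      using sp_diff[OF nd_cont[OF nd], of ?a x] ps by simp
  qed (use ps in auto)
qed

lemma one_dim_forward:
  assumes nd: "net_demand_assumption D" and ps: "0 < ps"
    and min: "\<And>y. 0 < y \<Longrightarrow> ps * c - surplus_pos D ps \<le> y * c - surplus_pos D y"
  shows "c = D ps"
proof -
  have "((\<lambda>y. y * c - surplus_pos D y) has_real_derivative (c - D ps)) (at ps)"
    using sp_deriv[OF nd ps] by (auto intro!: derivative_eq_intros)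
  then have "c - D ps = 0"
    by (rule DERIV_local_min[where d=ps]) (use ps min in \<open>auto simp: abs_if split: if_splits\<close>)
  then show ?thesis by simp
qed

lemma one_dim_backward:
  assumes nd: "net_demand_assumption D" and ps: "0 < ps" and p: "0 \<le> p"
  shows "ereal (ps * D ps) - surplus D ps \<le> ereal (p * D ps) - surplus D p"
proof (cases "p = 0")
  case False
  then show ?thesis using real_ineq[OF nd ps] p ps by (simp add: surplus_def)
next
  case True
  have "surplus D 0 \<le> ereal (surplus_pos D ps - ps * D ps)"
  proof (rule tendsto_le[OF trivial_limit_at_right_real _ sp_tendsto[OF nd]])
    show "((\<lambda>x. ereal (surplus_pos D ps - ps * D ps + x * D ps)) \<longlongrightarrow> ereal (surplus_pos D ps - ps * D ps)) (at_right 0)"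
      by (intro tendsto_intros) (auto intro!: tendsto_eq_intros)
    show "\<forall>\<^sub>F x in at_right 0. ereal (surplus_pos D x) \<le> ereal (surplus_pos D ps - ps * D ps + x * D ps)"
      using eventually_at_right_less[of 0] 
      by eventually_elim (use real_ineq[OF nd ps] in force)
  qed
  moreover have "surplus D ps = ereal (surplus_pos D ps)" using ps by (simp add: surplus_def)
  ultimately show ?thesis using True
    by (cases "surplus D 0") auto
qed

lemma sum_single_le:
  fixes f g :: "'n::finite \<Rightarrow> real"
  assumes "sum f UNIV \<le> sum g UNIV" "\<And>k. k \<noteq> i \<Longrightarrow> f k = g k"
  shows "f i \<le> g i"
proof -
  have "sum f UNIV = f i + sum f (UNIV - {i})" by (simp add: sum.remove)
  moreover have "sum g UNIV = g i + sum g (UNIV - {i})" by (simp add: sum.remove)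
  moreover have "sum f (UNIV - {i}) = sum g (UNIV - {i})" using assms(2) by (intro sum.cong) auto
  ultimately show ?thesis using assms(1) by simp
qed

lemma profit_sum:
  fixes P :: "'n::finite \<Rightarrow> real"
  shows "(\<Sum>i\<in>UNIV. profit F W P PE i (Q i) (E i) (L i)) =
    (\<Sum>i\<in>UNIV. P i * (F i (Q i) (E i) (L i) - (\<Sum>j\<in>UNIV. Q j i))) - (\<Sum>i\<in>UNIV. PE * E i + W i (L i))"
proof -
  have sw: "(\<Sum>i\<in>UNIV. \<Sum>j\<in>UNIV. P j * Q i j) = (\<Sum>i\<in>UNIV. P i * (\<Sum>j\<in>UNIV. Q j i))"
    by (subst sum.swap) (simp add: sum_distrib_left)
  show ?thesis
    unfolding profit_def using sw
    by (simp add: sum_subtractf right_diff_distrib sum.distrib algebra_simps)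
qed

lemma lag_decomp:
  fixes P :: "'n::finite \<Rightarrow> real"
  shows "lagrangian F W D PE P Q E L =
    ereal (- (\<Sum>i\<in>UNIV. PE * E i + W i (L i))) +
    (\<Sum>i\<in>UNIV. ereal (P i * (F i (Q i) (E i) (L i) - (\<Sum>j\<in>UNIV. Q j i))) - surplus (D i) (P i))"
proof -
  let ?c = "\<lambda>i. F i (Q i) (E i) (L i) - (\<Sum>j\<in>UNIV. Q j i)"
  let ?K = "\<Sum>i\<in>UNIV. PE * E i + W i (L i)"
  have "lagrangian F W D PE P Q E L =
     (\<Sum>i\<in>UNIV. ereal (profit F W P PE i (Q i) (E i) (L i))) + (\<Sum>i\<in>UNIV. - surplus (D i) (P i))"
    unfolding lagrangian_def minus_ereal_def by (simp add: sum.distrib)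
  also have "(\<Sum>i\<in>UNIV. ereal (profit F W P PE i (Q i) (E i) (L i))) = ereal (- ?K) + (\<Sum>i\<in>UNIV. ereal (P i * ?c i))"
    by (simp add: profit_sum)
  also have "(\<Sum>i\<in>UNIV. ereal (P i * ?c i) - surplus (D i) (P i)) =
      (\<Sum>i\<in>UNIV. ereal (P i * ?c i)) + (\<Sum>i\<in>UNIV. - surplus (D i) (P i))"
    unfolding minus_ereal_def by (simp add: sum.distrib)
  moreover have "\<And>a b S. ereal (a - b) + S = ereal (- b) + (ereal a + (S::ereal))"
    by (simp add: add.assoc[symmetric])
  ultimately show ?thesis by simp
qed

lemma lag_pos:
  fixes P :: "'n::finite \<Rightarrow> real"
  assumes "\<And>i. 0 < P i"
  shows "lagrangian F W D PE P Q E L =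
    ereal (\<Sum>i\<in>UNIV. profit F W P PE i (Q i) (E i) (L i) - surplus_pos (D i) (P i))"
  unfolding lagrangian_def using assms by (simp add: surplus_def sum_subtractf)

theorem lemma3p1:
  fixes F :: "'n::finite \<Rightarrow> ('n \<Rightarrow> real) \<Rightarrow> real \<Rightarrow> real \<Rightarrow> real"
    and W :: "'n \<Rightarrow> real \<Rightarrow> real"
    and D :: "'n \<Rightarrow> real \<Rightarrow> real"
    and PE :: real
    and Ps :: "'n \<Rightarrow> real" and Qs :: "'n \<Rightarrow> 'n \<Rightarrow> real" and Es Ls :: "'n \<Rightarrow> real"
  assumes F_nonneg: "\<And>i q e l. (\<forall>j. 0 \<le> q j) \<Longrightarrow> 0 \<le> e \<Longrightarrow> 0 \<le> l \<Longrightarrow> 0 \<le> F i q e l"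
    and W_pos: "\<And>i l. 0 \<le> l \<Longrightarrow> 0 < W i l"
    and PE_pos: "0 < PE"
    and ND: "\<And>i. net_demand_assumption (D i)"
    and Ps_pos: "\<And>i. 0 < Ps i"
    and alloc: "nonneg_alloc Qs Es Ls"
  shows "saddle_point F W D PE Ps Qs Es Ls \<longleftrightarrow> competitive_equilibrium F W D PE Ps Qs Es Ls"
proof -
  let ?c = "\<lambda>i. F i (Qs i) (Es i) (Ls i) - (\<Sum>j\<in>UNIV. Qs j i)"
  let ?K = "\<Sum>i\<in>UNIV. PE * Es i + W i (Ls i)"
  let ?g = "\<lambda>P i. ereal (P i * ?c i) - surplus (D i) (P i)"
  let ?pr = "\<lambda>Q E L i. profit F W Ps PE i (Q i) (E i) (L i) - surplus_pos (D i) (Ps i)"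
  have LP: "\<And>P. lagrangian F W D PE P Qs Es Ls = ereal (- ?K) + (\<Sum>i\<in>UNIV. ?g P i)"
    by (rule lag_decomp)
  have A: "(\<forall>Q E L. nonneg_alloc Q E L \<longrightarrow>
        lagrangian F W D PE Ps Q E L \<le> lagrangian F W D PE Ps Qs Es Ls) \<longleftrightarrow>
     (\<forall>i. \<forall>q e l. (\<forall>j. 0 \<le> q j) \<and> 0 \<le> e \<and> 0 \<le> l \<longrightarrow>
        profit F W Ps PE i q e l \<le> profit F W Ps PE i (Qs i) (Es i) (Ls i))" (is "?A1 \<longleftrightarrow> ?A2")
  proof
    assume H: ?A1
    show ?A2
    proof (intro allI impI)
      fix i and q :: "'n \<Rightarrow> real" and e l :: real assume qel: "(\<forall>j. 0 \<le> q j) \<and> 0 \<le> e \<and> (0::real) \<le> l"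
      have na: "nonneg_alloc (Qs(i:=q)) (Es(i:=e)) (Ls(i:=l))"
        using alloc qel unfolding nonneg_alloc_def by auto
      have "lagrangian F W D PE Ps (Qs(i:=q)) (Es(i:=e)) (Ls(i:=l)) \<le> lagrangian F W D PE Ps Qs Es Ls"
        using H na by blast
      then have "sum (?pr (Qs(i:=q)) (Es(i:=e)) (Ls(i:=l))) UNIV \<le> sum (?pr Qs Es Ls) UNIV"
        unfolding lag_pos[OF Ps_pos] by (simp only: ereal_less_eq(3))
      then have "?pr (Qs(i:=q)) (Es(i:=e)) (Ls(i:=l)) i \<le> ?pr Qs Es Ls i"
        by (rule sum_single_le[where f="?pr (Qs(i:=q)) (Es(i:=e)) (Ls(i:=l))" and g="?pr Qs Es Ls"]) simp_all
      then show "profit F W Ps PE i q e l \<le> profit F W Ps PE i (Qs i) (Es i) (Ls i)" by simp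
    qed
  next
    assume H: ?A2
    show ?A1
    proof (intro allI impI)
      fix Q :: "'n \<Rightarrow> 'n \<Rightarrow> real" and E L :: "'n \<Rightarrow> real" assume na: "nonneg_alloc Q E L"
      have "sum (?pr Q E L) UNIV \<le> sum (?pr Qs Es Ls) UNIV"
        using na H unfolding nonneg_alloc_def by (intro sum_mono) auto
      then show "lagrangian F W D PE Ps Q E L \<le> lagrangian F W D PE Ps Qs Es Ls"
        unfolding lag_pos[OF Ps_pos] by (simp only: ereal_less_eq(3))
    qed
  qed
  have B: "(\<forall>P. (\<forall>i. 0 \<le> P i) \<longrightarrow>
        lagrangian F W D PE Ps Qs Es Ls \<le> lagrangian F W D PE P Qs Es Ls) \<longleftrightarrow>
      (\<forall>i. F i (Qs i) (Es i) (Ls i) = D i (Ps i) + (\<Sum>j\<in>UNIV. Qs j i))" (is "?B1 \<longleftrightarrow> ?B2")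
  proof
    assume H: ?B1
    show ?B2
    proof
      fix i
      have "Ps i * ?c i - surplus_pos (D i) (Ps i) \<le> y * ?c i - surplus_pos (D i) y" if y: "0 < y" for y
      proof -
        let ?h = "\<lambda>P k. P k * ?c k - surplus_pos (D k) (P k)"
        have pos: "\<forall>k. 0 < (Ps(i:=y)) k" using Ps_pos y by auto
        have gh: "\<And>P. \<forall>k. 0 < P k \<Longrightarrow> (\<Sum>k\<in>UNIV. ?g P k) = ereal (sum (?h P) UNIV)"
          by (simp add: surplus_def sum_subtractf)
        have "lagrangian F W D PE Ps Qs Es Ls \<le> lagrangian F W D PE (Ps(i:=y)) Qs Es Ls"
        proof -
          have "\<forall>k. 0 \<le> (Ps(i:=y)) k" using pos by (simp add: less_imp_le)
          then show ?thesis using H by blast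
        qed
        then have "ereal (- ?K) + ereal (sum (?h Ps) UNIV) \<le> ereal (- ?K) + ereal (sum (?h (Ps(i:=y))) UNIV)"
          unfolding LP using gh[OF pos] gh Ps_pos by simp
        then have "sum (?h Ps) UNIV \<le> sum (?h (Ps(i:=y))) UNIV" by simp
        then have "?h Ps i \<le> ?h (Ps(i:=y)) i"
          by (rule sum_single_le[where f="?h Ps" and g="?h (Ps(i:=y))"]) simp_all
        then show ?thesis by simp
      qed
      then have "?c i = D i (Ps i)" by (intro one_dim_forward[OF ND Ps_pos]) auto
      then show "F i (Qs i) (Es i) (Ls i) = D i (Ps i) + (\<Sum>j\<in>UNIV. Qs j i)" by simp
    qed
  next
    assume H: ?B2
    show ?B1
    proof (intro allI impI)
      fix P :: "'n \<Rightarrow> real" assume P: "\<forall>i. 0 \<le> P i"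
      have c: "\<And>i. ?c i = D i (Ps i)" using H by simp
      have "(\<Sum>i\<in>UNIV. ?g Ps i) \<le> (\<Sum>i\<in>UNIV. ?g P i)"
        using P by (intro sum_mono) (simp add: c one_dim_backward[OF ND Ps_pos])
      then show "lagrangian F W D PE Ps Qs Es Ls \<le> lagrangian F W D PE P Qs Es Ls"
        unfolding LP by (rule add_left_mono)
    qed
  qed
  show ?thesis
    unfolding saddle_point_def competitive_equilibrium_def A B
    using alloc Ps_pos by (auto intro: less_imp_le)
qed

end
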